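(* For all integers $n,k\ge1$, $$\frac{L_2(k)}{n^k}<\sum_{t=k}^\infty\frac{g_{e,2}(t)}{n^t}<\frac{U_2(k)}{n^k},$$ where $L_2(k)=\left(-\frac{24\cosh\alpha}{23}-\frac{12}{5\sqrt{k+1}}\right)24^{-k}$ and $U_2(k)=\left(-\cosh\alpha+\frac{4\sqrt2\sinh\alpha}{\alpha}\sqrt{k+1}+\frac{66}{25\sqrt{k+1}}\right)24^{-k}$.
   Context: $\alpha=\pi/6$. $(a)_m=a(a+1)\cdots(a+m-1)$ is the rising factorial ($(a)_0=1$); $\binom{x}{m}=x(x-1)\cdots(x-m+1)/m!$ for $m\ge1$, $\binom{x}{0}=1$. For $t\ge1$, $$S_2(t)=\sum_{s=0}^{t-1}(1/2-s)_{s+1}\binom{-3/2}{t-s-1}\sum_{u=0}^s\frac{(-1)^u(-s)_u}{(s+u+1)!\,(2u)!}\left(\frac{\pi^2}{36}\right)^u,\qquad g_{e,2}(t)=\frac{(-1)^{t-1}}{24^t}S_2(t).$$ *)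

theory Defs
  imports "HOL-Analysis.Analysis"
begin

definition alpha6 :: real where "alpha6 = pi / 6"

definition S2 :: "nat \<Rightarrow> real" where
  "S2 t = (\<Sum>s<t. pochhammer (1/2 - real s) (s+1) * ((-3/2 :: real) gchoose (t - s - 1)) *
      (\<Sum>u\<le>s. (-1)^u * pochhammer (- real s) u / (fact (s+u+1) * fact (2*u)) * (pi^2/36)^u))"

definition g_e2 :: "nat \<Rightarrow> real" where
  "g_e2 t = (-1)^(t-1) / 24^t * S2 t"

definition L2 :: "nat \<Rightarrow> real" where
  "L2 k = (- 24 * cosh alpha6 / 23 - 12 / (5 * sqrt (real k + 1))) * 24 powr (- real k)"

definition U2 :: "nat \<Rightarrow> real" where
  "U2 k = (- cosh alpha6 + 4 * sqrt 2 * sinh alpha6 / alpha6 * sqrt (real k + 1)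
           + 66 / (25 * sqrt (real k + 1))) * 24 powr (- real k)"

end

theory Submission
  imports Defs
begin

definition Pc :: "nat \<Rightarrow> real" where "Pc s = pochhammer (1/2) s / 2"
definition Gc :: "nat \<Rightarrow> real" where "Gc m = pochhammer (3/2) m / fact m"
definition Ic :: "nat \<Rightarrow> real" where
  "Ic s = (\<Sum>u\<le>s. (-1)^u * pochhammer (- real s) u / (fact (s+u+1) * fact (2*u)) * (pi^2/36)^u)"

lemma P_eq: "(-1)^s * pochhammer (1/2 - real s) (s+1) = Pc s"
proof (induction s)
  case 0 then show ?case by (simp add: Pc_def)
next
  case (Suc s)
  have "pochhammer (1/2 - real (Suc s)) (Suc s + 1) = (1/2 - real (Suc s)) * pochhammer (1/2 - real (Suc s) + 1) (s+1)"
    by (simp only: Suc_eq_plus1[symmetric] pochhammer_rec)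
  also have "1/2 - real (Suc s) + 1 = 1/2 - real s" by simp
  finally have "pochhammer (1/2 - real (Suc s)) (Suc s + 1) = (1/2 - real (Suc s)) * pochhammer (1/2 - real s) (s+1)" .
  hence "(-1)^Suc s * pochhammer (1/2 - real (Suc s)) (Suc s + 1) = (-1)^Suc s * ((1/2 - real (Suc s)) * pochhammer (1/2 - real s) (s+1))"
    by (simp only:)
  also have "\<dots> = (real s + 1/2) * ((-1)^s * pochhammer (1/2 - real s) (s+1))"
    by (simp add: algebra_simps)
  also have "\<dots> = Pc (Suc s)" using Suc by (simp add: Pc_def pochhammer_rec' algebra_simps)
  finally show ?case .
qed

lemma Pc_nonneg: "Pc s \<ge> 0" unfolding Pc_def by (simp add: pochhammer_nonneg)

lemma Pc_sum: "(\<Sum>s<N. Pc s / fact (s+1)) = 1 - 2 * Pc N / fact N"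
proof (induction N)
  case 0 then show ?case by (simp add: Pc_def)
next
  case (Suc N)
  have e: "Pc (Suc N) = (real N + 1/2) * Pc N" by (simp add: Pc_def pochhammer_rec' algebra_simps)
  have "(\<Sum>s<Suc N. Pc s / fact (s+1)) = (\<Sum>s<N. Pc s / fact (s+1)) + Pc N / fact (N+1)" by simp
  also have "\<dots> = 1 - 2 * Pc N / fact N + Pc N / fact (N+1)" using Suc by simp
  also have "\<dots> = 1 - 2 * Pc (Suc N) / fact (Suc N)"
  proof -
    define x where "x = Pc N / fact N"
    have a: "Pc N / fact (N+1) = x / (real N + 1)" by (simp add: x_def fact_Suc field_simps)
    have b: "Pc (Suc N) / fact (Suc N) = (real N + 1/2) * x / (real N + 1)" by (simp add: e x_def fact_Suc field_simps)
    have c: "2 * Pc N / fact N = 2 * x" by (simp add: x_def)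
    have b2: "2 * Pc (Suc N) / fact (Suc N) = 2 * ((real N + 1/2) * x / (real N + 1))"
      using b by (metis times_divide_eq_right)
    show ?thesis unfolding a c b2 by (simp add: field_simps)
  qed
  finally show ?case .
qed

lemma Pc_sum_le: "(\<Sum>s<N. Pc s / fact (s+1)) \<le> 1"
  using Pc_sum[of N] Pc_nonneg[of N] by (simp add: divide_nonneg_pos)

lemma G_eq: "(-1)^m * ((-3/2::real) gchoose m) = Gc m"
  by (simp add: gbinomial_pochhammer Gc_def)

lemma Gc_Suc: "Gc (Suc m) = Gc m * ((real m + 3/2) / (real m + 1))"
  by (simp add: Gc_def pochhammer_rec' field_simps)

lemma Gc_nonneg: "Gc m \<ge> 0" unfolding Gc_def by (simp add: pochhammer_nonneg)

lemma Gc_mono: "m \<le> m' \<Longrightarrow> Gc m \<le> Gc m'"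
proof (induction m' rule: dec_induct)
  case base then show ?case by simp
next
  case (step n)
  have "Gc n \<le> Gc n * ((real n + 3/2) / (real n + 1))"
    using Gc_nonneg[of n] by (intro mult_le_cancel_left1[THEN iffD2]) (auto simp: field_simps)
  then show ?case using step Gc_Suc[of n] by simp
qed

lemma Gc_sq: "(Gc m)^2 \<le> 2 * real m + 1"
proof (induction m)
  case 0 then show ?case by (simp add: Gc_def)
next
  case (Suc m)
  have "(Gc (Suc m))^2 = (Gc m)^2 * ((real m + 3/2) / (real m + 1))^2"
    by (simp only: Gc_Suc power_mult_distrib)
  also have "\<dots> \<le> (2 * real m + 1) * ((real m + 3/2) / (real m + 1))^2"
    using Suc by (intro mult_right_mono) auto
  also have "\<dots> \<le> 2 * real (Suc m) + 1"
  proof -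
    have i: "(2 * real m + 3) * (real m + 1)^2 - (2 * real m + 1) * (real m + 3/2)^2 = real m / 2 + 3/4"
      by (simp add: power2_eq_square algebra_simps) (simp add: field_simps)
    have "(2 * real m + 1) * ((real m + 3/2) / (real m + 1))^2 = (2 * real m + 1) * (real m + 3/2)^2 / (real m + 1)^2"
      by (simp add: power_divide)
    also have "\<dots> \<le> 2 * real m + 3"
      by (subst pos_divide_le_eq) (use i in auto)
    finally show ?thesis by simp
  qed
  finally show ?case .
qed

lemma x_bounds: "0 \<le> pi^2/36" "pi^2/36 \<le> (1/3::real)"
proof -
  have "pi \<le> 3.1415926535899" by (rule pi_approx(2))
  also have "(3.1415926535899::real) \<le> 3.2" by simp
  finally have "pi \<le> 3.2" .
  hence "pi^2 \<le> 3.2^2" using pi_gt_zero by (intro power_mono) auto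
  moreover have "(3.2::real)^2 \<le> 12" by (simp add: power2_eq_square)
  ultimately show "pi^2/36 \<le> (1/3::real)" by linarith
qed simp

lemma geom_le: assumes "0 \<le> x" "x \<le> (1/3::real)" shows "(\<Sum>u<N. x^u) \<le> 3/2 - 3/2 * x^N"
proof (induction N)
  case 0 then show ?case by simp
next
  case (Suc N)
  have "(3*x)*x^N \<le> 1 * x^N" by (rule mult_right_mono) (use assms in auto)
  hence "3 * x^(Suc N) \<le> x^N" by (simp add: power_Suc mult.assoc)
  then show ?case using Suc by simp
qed

lemma term_eq: "u \<le> s \<Longrightarrow> (-1)^u * pochhammer (- real s) u = pochhammer (real s - real u + 1) u"
  by (simp add: pochhammer_minus)

lemma fact_split: "(fact (s+u+1) :: real) = fact (s+1) * pochhammer (real s + 2) u"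
proof -
  have "(fact (s+1+u) :: real) = pochhammer 1 (s+1+u)" by (simp add: pochhammer_fact)
  also have "\<dots> = pochhammer 1 (s+1) * pochhammer (1 + real (s+1)) u" by (rule pochhammer_product')
  also have "\<dots> = fact (s+1) * pochhammer (real s + 2) u" by (simp add: pochhammer_fact add_ac)
  finally show ?thesis by (simp add: add_ac)
qed

lemma poch_le: "u \<le> s \<Longrightarrow> pochhammer (real s - real u + 1) u \<le> pochhammer (real s + 2) u"
  unfolding pochhammer_prod by (intro prod_mono) auto

lemma term_bounds:
  assumes "u \<le> s"
  shows "0 \<le> (-1)^u * pochhammer (- real s) u / (fact (s+u+1) * fact (2*u)) * (pi^2/36)^u"
    and "(-1)^u * pochhammer (- real s) u / (fact (s+u+1) * fact (2*u)) * (pi^2/36)^u \<le> (pi^2/36)^u / fact (s+1)"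
proof -
  have p0: "0 \<le> pochhammer (real s - real u + 1) u" using assms by (intro pochhammer_nonneg) auto
  have pp: "0 < pochhammer (real s + 2) u" by (intro pochhammer_pos) auto
  show "0 \<le> (-1)^u * pochhammer (- real s) u / (fact (s+u+1) * fact (2*u)) * (pi^2/36)^u"
    unfolding term_eq[OF assms] using p0 by simp
  have "(-1)^u * pochhammer (- real s) u / (fact (s+u+1) * fact (2*u))
      = pochhammer (real s - real u + 1) u / pochhammer (real s + 2) u / (fact (s+1) * fact (2*u))"
    unfolding term_eq[OF assms] fact_split by (simp add: field_simps)
  also have "\<dots> \<le> 1 / (fact (s+1) * fact (2*u))"
    using poch_le[OF assms] pp p0 by (intro divide_right_mono) (auto simp: divide_le_eq_1)
  also have "\<dots> \<le> 1 / fact (s+1)"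
  proof (rule divide_left_mono)
    have "fact (s+1) * 1 \<le> fact (s+1) * (fact (2*u) :: real)"
      by (rule mult_left_mono) (auto simp: fact_ge_1)
    thus "fact (s+1) \<le> fact (s+1) * (fact (2*u) :: real)" by simp
  qed auto
  finally have c: "(-1)^u * pochhammer (- real s) u / (fact (s+u+1) * fact (2*u)) \<le> 1 / fact (s+1)" .
  have "(-1)^u * pochhammer (- real s) u / (fact (s+u+1) * fact (2*u)) * (pi^2/36)^u \<le> 1 / fact (s+1) * (pi^2/36)^u"
    by (rule mult_right_mono[OF c]) simp
  thus "(-1)^u * pochhammer (- real s) u / (fact (s+u+1) * fact (2*u)) * (pi^2/36)^u \<le> (pi^2/36)^u / fact (s+1)"
    by simp
qed

lemma Ic_nonneg: "0 \<le> Ic s"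
  unfolding Ic_def by (intro sum_nonneg term_bounds(1)) auto

lemma Ic_le: "Ic s \<le> 3/2 / fact (s+1)"
proof -
  have "Ic s \<le> (\<Sum>u\<le>s. (pi^2/36)^u / fact (s+1))"
    unfolding Ic_def by (intro sum_mono term_bounds(2)) auto
  also have "\<dots> = (\<Sum>u<Suc s. (pi^2/36)^u) / fact (s+1)"
    by (simp add: sum_divide_distrib lessThan_Suc_atMost)
  also have "\<dots> \<le> 3/2 / fact (s+1)"
  proof (rule divide_right_mono)
    have g0: "(\<Sum>u<Suc s. (pi^2/36)^u) \<le> 3/2 - 3/2 * (pi^2/36)^Suc s" by (rule geom_le[OF x_bounds])
    have g1: "0 \<le> (pi^2/36::real)^Suc s" by simp
    from g0 g1 show "(\<Sum>u<Suc s. (pi^2/36)^u) \<le> 3/2" by linarith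
  qed auto
  finally show ?thesis .
qed


lemma neg1_sq: "(-1::real)^n * (-1)^n = 1"
  by (simp add: power_mult_distrib[symmetric])

lemma h_term:
  assumes st: "s < t"
  shows "(-1)^(t-1) * (pochhammer (1/2 - real s) (s+1) * ((-3/2::real) gchoose (t - s - 1)) * Ic s)
     = Pc s * Gc (t-1-s) * Ic s"
proof -
  have "(-1)^s * Pc s = ((-1)^s * (-1)^s) * pochhammer (1/2 - real s) (s+1)"
    unfolding P_eq[of s, symmetric] by (simp only: mult.assoc)
  hence p: "pochhammer (1/2 - real s) (s+1) = (-1)^s * Pc s" by (simp only: neg1_sq mult_1)
  have "(-1)^(t-1-s) * Gc (t-1-s) = ((-1)^(t-1-s) * (-1)^(t-1-s)) * ((-3/2::real) gchoose (t-1-s))"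
    unfolding G_eq[of "t-1-s", symmetric] by (simp only: mult.assoc)
  hence g0: "((-3/2::real) gchoose (t-1-s)) = (-1)^(t-1-s) * Gc (t-1-s)" by (simp only: neg1_sq mult_1)
  have "t - s - 1 = t - 1 - s" by simp
  hence g: "((-3/2::real) gchoose (t - s - 1)) = (-1)^(t-1-s) * Gc (t-1-s)" using g0 by simp
  have "s + (t-1-s) = t - 1" using st by simp
  hence e: "(-1::real)^(t-1) = (-1)^s * (-1)^(t-1-s)"
    by (metis power_add)
  have "(-1)^(t-1) * (pochhammer (1/2 - real s) (s+1) * ((-3/2::real) gchoose (t - s - 1)) * Ic s)
     = ((-1)^s * (-1)^s) * ((-1)^(t-1-s) * (-1)^(t-1-s)) * (Pc s * Gc (t-1-s) * Ic s)"
    unfolding p g e by (simp add: mult_ac)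
  also have "\<dots> = Pc s * Gc (t-1-s) * Ic s" by (simp add: neg1_sq)
  finally show ?thesis .
qed

lemma h_sum:
  shows "(-1)^(t-1) * S2 t = (\<Sum>s<t. Pc s * Gc (t-1-s) * Ic s)"
  unfolding S2_def sum_distrib_left Ic_def[symmetric]
  by (rule sum.cong[OF refl], rule h_term) simp

lemma h_nonneg: "t \<ge> 1 \<Longrightarrow> 0 \<le> (-1)^(t-1) * S2 t"
  unfolding h_sum by (intro sum_nonneg mult_nonneg_nonneg Pc_nonneg Gc_nonneg Ic_nonneg)

lemma h_le: assumes "t \<ge> 1" shows "(-1)^(t-1) * S2 t \<le> 3/2 * Gc (t-1)"
proof -
  have "(-1)^(t-1) * S2 t \<le> (\<Sum>s<t. Pc s * Gc (t-1) * (3/2 / fact (s+1)))"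
    unfolding h_sum
  proof (rule sum_mono)
    fix s assume "s \<in> {..<t}"
    have "Pc s * Gc (t-1-s) \<le> Pc s * Gc (t-1)"
      by (rule mult_left_mono[OF Gc_mono Pc_nonneg]) auto
    hence "Pc s * Gc (t-1-s) * Ic s \<le> Pc s * Gc (t-1) * Ic s"
      by (rule mult_right_mono[OF _ Ic_nonneg])
    also have "\<dots> \<le> Pc s * Gc (t-1) * (3/2 / fact (s+1))"
      by (rule mult_left_mono[OF Ic_le]) (simp add: Pc_nonneg Gc_nonneg)
    finally show "Pc s * Gc (t-1-s) * Ic s \<le> Pc s * Gc (t-1) * (3/2 / fact (s+1))" .
  qed
  also have "\<dots> = 3/2 * Gc (t-1) * (\<Sum>s<t. Pc s / fact (s+1))"
    by (simp add: sum_distrib_left mult_ac)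
  also have "\<dots> \<le> 3/2 * Gc (t-1) * 1"
    by (intro mult_left_mono Pc_sum_le) (simp add: Gc_nonneg)
  finally show ?thesis by simp
qed

lemma h_le2:
  assumes "k \<ge> 1"
  shows "(-1)^(k+i-1) * S2 (k+i) \<le> 3/2 * sqrt (2 * (real k + 1)) * 2^i"
proof -
  have "Gc (k+i-1) \<le> sqrt (2 * real (k+i-1) + 1)" by (rule real_le_rsqrt[OF Gc_sq])
  also have "\<dots> \<le> sqrt (2 * (real k + 1) * (2^i)^2)"
  proof (rule real_sqrt_le_mono)
    have "real i + 1 \<le> 2^i" by (induction i) auto
    hence "real i + 1 \<le> (2^i)^2" by (smt (verit) one_le_power power2_eq_square mult_le_cancel_left1)
    hence m: "(real k + 1) * (real i + 1) \<le> (real k + 1) * (2^i)^2" by (intro mult_left_mono) auto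
    have f2: "2 * real (k+i-1) + 1 \<le> 2 * ((real k + 1) * (real i + 1))" using assms
      by (simp add: of_nat_diff algebra_simps)
    have "2 * ((real k + 1) * (real i + 1)) \<le> 2 * ((real k + 1) * (2^i)^2)" using m by linarith
    hence "2 * real (k+i-1) + 1 \<le> 2 * ((real k + 1) * (2^i)^2)" using f2 by linarith
    thus "2 * real (k+i-1) + 1 \<le> 2 * (real k + 1) * (2^i)^2" by (simp only: mult.assoc)
  qed
  also have "\<dots> = sqrt (2 * (real k + 1)) * 2^i" by (simp add: real_sqrt_mult)
  finally have "Gc (k+i-1) \<le> sqrt (2 * (real k + 1)) * 2^i" .
  thus ?thesis using h_le[of "k+i"] assms by simp
qed

lemma aux_half: "(p::real) \<le> a \<Longrightarrow> b \<le> c \<Longrightarrow> (p - c)/2 \<le> (a - b)/2" by (rule divide_right_mono) linarith+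
lemma aux_cosh: "(a::real) \<le> 3 \<Longrightarrow> b \<le> 1 \<Longrightarrow> y = (a+b)/2 \<Longrightarrow> y \<le> 2"
  using divide_right_mono[of "a+b" 4 2] by simp

lemma sinh_bound: "3/4 * alpha6 \<le> sinh alpha6" and cosh_bound: "cosh alpha6 \<le> 2"
  and alpha_pos: "0 < alpha6"
proof -
  have a0: "0 < alpha6" "alpha6 \<le> 1" using pi_gt_zero pi_less_4 by (auto simp: alpha6_def)
  thus "0 < alpha6" by simp
  define x where "x = alpha6"
  have x: "0 < x" "x \<le> 1" using a0 by (auto simp: x_def)
  have e1: "1 + x \<le> exp x" by simp
  have e2: "exp (-x) \<le> 1 / (1 + x)" using e1 x by (simp add: exp_minus' divide_simps)
  have "3/4 * x \<le> (1 + x - 1/(1+x)) / 2"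
    using x by (simp add: field_simps power2_eq_square)
  also have "\<dots> \<le> (exp x - exp (-x)) / 2" using aux_half[OF e1 e2] .
  finally show "3/4 * alpha6 \<le> sinh alpha6" by (simp add: sinh_field_def x_def)
  have "exp x \<le> exp 1" using x by simp
  hence "exp x \<le> 3" using exp_le by linarith
  moreover have "exp (-x) \<le> 1" using x by simp
  moreover have "cosh alpha6 = (exp x + exp (-x)) / 2" by (simp add: cosh_field_def x_def)
  ultimately show "cosh alpha6 \<le> 2" by (rule aux_cosh)
qed

theorem mainTheorem17:
  fixes n k :: nat
  assumes "n \<ge> 1" and "k \<ge> 1"
  shows "summable (\<lambda>i. g_e2 (i + k) / real n ^ (i + k))
       \<and> L2 k / real n ^ k < (\<Sum>i. g_e2 (i + k) / real n ^ (i + k))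
       \<and> (\<Sum>i. g_e2 (i + k) / real n ^ (i + k)) < U2 k / real n ^ k"
proof -
  define f where "f i = (-1)^(k+i-1) * S2 (k+i) / (24 * real n)^i" for i
  define D where "D = (24 * real n)^k"
  define C where "C = 3/2 * sqrt (2 * (real k + 1))"
  have n: "real n \<ge> 1" using assms by simp
  have Dpos: "D > 0" using n by (simp add: D_def)
  have eq: "g_e2 (i + k) / real n ^ (i + k) = f i / D" for i
    by (simp add: g_e2_def f_def D_def power_add power_mult_distrib add.commute field_simps)
  have f0: "0 \<le> f i" for i unfolding f_def using h_nonneg[of "k+i"] assms by simp
  have fle: "f i \<le> C * (1/12)^i" for i
  proof -
    have "f i \<le> C * 2^i / (24 * real n)^i"
      unfolding f_def C_def using h_le2[OF assms(2), of i] n by (intro divide_right_mono) auto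
    also have "\<dots> \<le> C * 2^i / 24^i"
      using n by (intro divide_left_mono power_mono) (auto simp: C_def)
    also have "\<dots> = C * (1/12)^i"
    proof -
      have "(24::real)^i = 2^i * 12^i" by (simp add: power_mult_distrib[symmetric])
      thus ?thesis by (simp add: power_one_over)
    qed
    finally show ?thesis .
  qed
  have gs: "summable (\<lambda>i. C * (1/12::real)^i)" by (intro summable_mult summable_geometric) simp
  have fs: "summable f" by (rule summable_comparison_test'[OF gs, of 0]) (use f0 fle in simp)
  have sum_eq: "(\<Sum>i. g_e2 (i + k) / real n ^ (i + k)) = suminf f / D"
    unfolding eq by (rule suminf_divide[OF fs])
  have summ: "summable (\<lambda>i. g_e2 (i + k) / real n ^ (i + k))"
    unfolding eq by (rule summable_divide[OF fs])
  have sf0: "0 \<le> suminf f" by (intro suminf_nonneg fs f0)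
  have sfle: "suminf f \<le> C * (12/11)"
  proof -
    have "suminf f \<le> (\<Sum>i. C * (1/12::real)^i)" by (intro suminf_le fs gs fle)
    also have "\<dots> = C * (12/11)" by (subst suminf_mult) (auto intro: summable_geometric simp: suminf_geometric)
    finally show ?thesis .
  qed
  have p24: "(24::real) powr (- real k) = 1 / 24^k" by (simp add: powr_minus powr_realpow divide_inverse)
  have Dn: "24 powr (- real k) / real n ^ k = 1 / D" unfolding p24 D_def by (simp add: power_mult_distrib)
  have sq: "sqrt (real k + 1) > 0" by simp
  have L: "L2 k / real n ^ k < 0"
  proof -
    have "- 24 * cosh alpha6 / 23 - 12 / (5 * sqrt (real k + 1)) < 0"
    proof -
      have a: "0 < 24 * cosh alpha6 / 23" by simp
      have b: "0 < 12 / (5 * sqrt (real k + 1))" using sq by simp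
      show ?thesis using a b by linarith
    qed
    thus ?thesis using n by (simp add: L2_def divide_neg_pos mult_neg_pos)
  qed
  define V where "V = - cosh alpha6 + 4 * sqrt 2 * sinh alpha6 / alpha6 * sqrt (real k + 1) + 66 / (25 * sqrt (real k + 1))"
  have U0: "U2 k = V * 24 powr (- real k)" by (simp add: U2_def V_def)
  have U: "U2 k / real n ^ k = V / D"
  proof -
    have "U2 k / real n ^ k = V * (24 powr (- real k) / real n ^ k)" unfolding U0 by (rule times_divide_eq_right[symmetric])
    thus ?thesis unfolding Dn by simp
  qed
  have V: "C * (12/11) < V"
  proof -
    have r: "sqrt 2 * sqrt (real k + 1) = sqrt (2 * (real k + 1))" by (rule real_sqrt_mult[symmetric])
    have r2: "sqrt (2 * (real k + 1)) \<ge> 2" using assms by (simp add: real_le_rsqrt)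
    have sa: "sinh alpha6 / alpha6 \<ge> 3/4" using sinh_bound alpha_pos by (simp add: divide_simps)
    have "4 * sqrt 2 * sinh alpha6 / alpha6 * sqrt (real k + 1) = 4 * (sinh alpha6 / alpha6) * sqrt (2 * (real k + 1))"
      using r by (simp add: field_simps)
    also have "\<dots> \<ge> 4 * (3/4) * sqrt (2 * (real k + 1))"
    proof (rule mult_right_mono)
      show "4 * (3/4) \<le> 4 * (sinh alpha6 / alpha6)" using sa by linarith
    qed simp
    finally have A: "4 * sqrt 2 * sinh alpha6 / alpha6 * sqrt (real k + 1) \<ge> 3 * sqrt (2 * (real k + 1))" by simp
    have B: "66 / (25 * sqrt (real k + 1)) > 0" using sq by simp
    show ?thesis unfolding V_def C_def using A B cosh_bound r2 by linarith
  qed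
  show ?thesis
  proof (intro conjI summ)
    show "L2 k / real n ^ k < (\<Sum>i. g_e2 (i + k) / real n ^ (i + k))"
    proof -
      have "0 \<le> suminf f / D" by (rule divide_nonneg_pos[OF sf0 Dpos])
      thus ?thesis unfolding sum_eq using L by linarith
    qed
    show "(\<Sum>i. g_e2 (i + k) / real n ^ (i + k)) < U2 k / real n ^ k"
      unfolding sum_eq U using sfle V Dpos by (intro divide_strict_right_mono) auto
  qed
qed

end
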